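(* For a bipartite quantum channel $\mathcal N_{AB\to A'B'}$, $$\gamma_{\mathrm{PPT}}(\mathcal N_{AB\to A'B'})\ge 2^{LN_{\max}(\mathcal N_{AB\to A'B'})}-1.$$
   Context: All Hilbert spaces finite-dimensional; $\log$ base 2. Alice holds $A$, $A'$; Bob holds $B$, $B'$. The unnormalized Choi operator of $\mathcal M_{AB\to A'B'}$ is $J^{\mathcal M}_{ABA'B'}=\sum_{i,j}|i\rangle\langle j|_{AB}\otimes\mathcal M(|i\rangle\langle j|_{AB})$. A bipartite channel is PPT if $(J^{\mathcal M}_{ABA'B'})^{T_{BB'}}\ge0$. $\gamma_{\mathrm{PPT}}(\mathcal N)=\inf\{c_1+c_2:\mathcal N=c_1\mathcal M_1-c_2\mathcal M_2,\ c_i\ge0,\ \mathcal M_i\text{ PPT channels}\}$. The max-logarithmic negativity is $LN_{\max}(\mathcal N)=\log\inf\{\max\{\|P_{AB}\|_\infty,\|P_{AB}^{T_B}\|_\infty\}:\ -P_{ABA'B'}^{T_{BB'}}\le(J^{\mathcal N}_{ABA'B'})^{T_{BB'}}\le P_{ABA'B'}^{T_{BB'}},\ P_{ABA'B'}\ge0\}$ with $P_{AB}=\mathrm{tr}_{A'B'}P_{ABA'B'}$. *)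

theory Defs
  imports Complex_Main "HOL-Library.Extended_Real"
begin

text \<open>Operators on a finite-dimensional Hilbert space with orthonormal basis indexed by
  the finite type 'i are represented by their matrices 'i \<Rightarrow> 'i \<Rightarrow> complex.
  Systems A, B, A', B' have basis types 'a, 'b, 'c, 'd; AB has basis 'a \<times> 'b,
  ABA'B' has basis ('a \<times> 'b) \<times> ('c \<times> 'd).\<close>

type_synonym 'i op = "'i \<Rightarrow> 'i \<Rightarrow> complex"

definition op_apply :: "'i::finite op \<Rightarrow> ('i \<Rightarrow> complex) \<Rightarrow> ('i \<Rightarrow> complex)" where
  "op_apply X v = (\<lambda>i. \<Sum>j\<in>UNIV. X i j * v j)"

definition vnorm :: "('i::finite \<Rightarrow> complex) \<Rightarrow> real" where
  "vnorm v = sqrt (\<Sum>i\<in>UNIV. (cmod (v i))\<^sup>2)"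

definition psd :: "'i::finite op \<Rightarrow> bool" where
  "psd X \<longleftrightarrow> (\<forall>v. (\<Sum>i\<in>UNIV. \<Sum>j\<in>UNIV. cnj (v i) * X i j * v j) \<in> \<real> \<and>
                     0 \<le> Re (\<Sum>i\<in>UNIV. \<Sum>j\<in>UNIV. cnj (v i) * X i j * v j))"

definition opnorm :: "'i::finite op \<Rightarrow> real" where
  "opnorm X = Sup {vnorm (op_apply X v) | v. vnorm v \<le> 1}"

definition op_trace :: "'i::finite op \<Rightarrow> complex" where
  "op_trace X = (\<Sum>i\<in>UNIV. X i i)"

definition unit_op :: "'i \<Rightarrow> 'i \<Rightarrow> 'i op" where
  "unit_op i j = (\<lambda>x y. if x = i \<and> y = j then 1 else 0)"

definition choi :: "(('a \<times> 'b) op \<Rightarrow> ('c \<times> 'd) op) \<Rightarrow> (('a \<times> 'b) \<times> ('c \<times> 'd)) op" where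
  "choi M = (\<lambda>(i, k) (j, l). M (unit_op i j) k l)"

definition ptBB :: "(('a \<times> 'b) \<times> ('c \<times> 'd)) op \<Rightarrow> (('a \<times> 'b) \<times> ('c \<times> 'd)) op" where
  "ptBB X = (\<lambda>((a, b), (c, d)) ((a', b'), (c', d')). X ((a, b'), (c, d')) ((a', b), (c', d)))"

definition ptB :: "('a \<times> 'b) op \<Rightarrow> ('a \<times> 'b) op" where
  "ptB X = (\<lambda>(a, b) (a', b'). X (a, b') (a', b))"

definition trA'B' :: "(('a \<times> 'b) \<times> ('c::finite \<times> 'd::finite)) op \<Rightarrow> ('a \<times> 'b) op" where
  "trA'B' P = (\<lambda>x y. \<Sum>k\<in>UNIV. P (x, k) (y, k))"

definition linear_map :: "('i op \<Rightarrow> 'j op) \<Rightarrow> bool" where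
  "linear_map M \<longleftrightarrow>
     (\<forall>X Y. M (\<lambda>i j. X i j + Y i j) = (\<lambda>k l. M X k l + M Y k l)) \<and>
     (\<forall>c X. M (\<lambda>i j. c * X i j) = (\<lambda>k l. c * M X k l))"

text \<open>Bipartite quantum channel AB \<rightarrow> A'B': linear, completely positive (Choi operator PSD,
  Choi's criterion) and trace preserving.\<close>
definition bichannel ::
  "(('a::finite \<times> 'b::finite) op \<Rightarrow> ('c::finite \<times> 'd::finite) op) \<Rightarrow> bool" where
  "bichannel M \<longleftrightarrow> linear_map M \<and> psd (choi M) \<and> (\<forall>X. op_trace (M X) = op_trace X)"

definition ppt_channel ::
  "(('a::finite \<times> 'b::finite) op \<Rightarrow> ('c::finite \<times> 'd::finite) op) \<Rightarrow> bool" where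
  "ppt_channel M \<longleftrightarrow> bichannel M \<and> psd (ptBB (choi M))"

definition gamma_PPT ::
  "(('a::finite \<times> 'b::finite) op \<Rightarrow> ('c::finite \<times> 'd::finite) op) \<Rightarrow> ereal" where
  "gamma_PPT N = Inf {ereal (c1 + c2) | c1 c2 M1 M2.
      c1 \<ge> 0 \<and> c2 \<ge> 0 \<and> ppt_channel M1 \<and> ppt_channel M2 \<and>
      N = (\<lambda>X k l. complex_of_real c1 * M1 X k l - complex_of_real c2 * M2 X k l)}"

definition LN_max ::
  "(('a::finite \<times> 'b::finite) op \<Rightarrow> ('c::finite \<times> 'd::finite) op) \<Rightarrow> real" where
  "LN_max N = log 2 (Inf {max (opnorm (trA'B' P)) (opnorm (ptB (trA'B' P))) | P.
      psd P \<and>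
      psd (\<lambda>x y. ptBB (choi N) x y + ptBB P x y) \<and>
      psd (\<lambda>x y. ptBB P x y - ptBB (choi N) x y)})"

end

theory Submission
  imports Defs "HOL-Analysis.L2_Norm"
begin

lemma vnorm_L2: "vnorm v = L2_set (\<lambda>i. cmod (v i)) UNIV"
  by (simp add: vnorm_def L2_set_def)

lemma sum_ifd1: "(\<Sum>j\<in>UNIV. (if x = j then (a::complex) else 0) * f j) = a * f (x::'i::finite)"
proof -
  have "(\<lambda>j. (if x = j then a else 0) * f j) = (\<lambda>j. if x = j then a * f j else 0)" by auto
  show ?thesis unfolding \<open>_ = _\<close> by (simp add: sum.delta')
qed

lemma sum_ifd2: "(\<Sum>j\<in>UNIV. (cmod (if j = (x::'i::finite) then (1::complex) else 0))\<^sup>2) = (1::real)"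
proof -
  have "(\<lambda>j. (cmod (if j = x then (1::complex) else 0))\<^sup>2) = (\<lambda>j. if j = x then 1 else 0)" by auto
  show ?thesis unfolding \<open>_ = _\<close> using sum.delta[of UNIV x "\<lambda>_. 1::real"] by simp
qed

lemma sum_ifd3: "(\<Sum>j\<in>UNIV. f j * (if j = x then (1::complex) else 0)) = f (x::'i::finite)"
proof -
  have "(\<lambda>j. f j * (if j = x then (1::complex) else 0)) = (\<lambda>j. if j = x then f j else 0)" by auto
  show ?thesis unfolding \<open>_ = _\<close> by (simp add: sum.delta)
qed

lemma vnorm_ge: "cmod (v i) \<le> vnorm (v::'i::finite \<Rightarrow> complex)"
  unfolding vnorm_L2 by (rule member_le_L2_set) auto

lemma vnorm_le_sum: "vnorm (v::'i::finite \<Rightarrow> complex) \<le> (\<Sum>i\<in>UNIV. cmod (v i))"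
  unfolding vnorm_L2 by (rule L2_set_le_sum) auto

lemma opnorm_bdd: "bdd_above {vnorm (op_apply X v) | v. vnorm v \<le> 1}"
proof (rule bdd_aboveI)
  fix r assume "r \<in> {vnorm (op_apply X v) | v. vnorm v \<le> 1}"
  then obtain v where r: "r = vnorm (op_apply X v)" and v: "vnorm v \<le> 1" by auto
  have "r \<le> (\<Sum>i\<in>UNIV. cmod (op_apply X v i))" using r vnorm_le_sum by simp
  also have "\<dots> \<le> (\<Sum>i\<in>UNIV. \<Sum>j\<in>UNIV. cmod (X i j))"
  proof (rule sum_mono)
    fix i
    have "cmod (op_apply X v i) \<le> (\<Sum>j\<in>UNIV. cmod (X i j * v j))"
      unfolding op_apply_def by (rule norm_sum)
    also have "\<dots> \<le> (\<Sum>j\<in>UNIV. cmod (X i j))"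
    proof (rule sum_mono)
      fix j
      have "cmod (v j) \<le> 1" using vnorm_ge[of v j] v by simp
      then show "cmod (X i j * v j) \<le> cmod (X i j)"
        by (simp add: norm_mult mult_left_le)
    qed
    finally show "cmod (op_apply X v i) \<le> (\<Sum>j\<in>UNIV. cmod (X i j))" .
  qed
  finally show "r \<le> (\<Sum>i\<in>UNIV. \<Sum>j\<in>UNIV. cmod (X i j))" .
qed

lemma opnorm_ge_diag: "cmod (X i i) \<le> opnorm (X::'i::finite op)"
proof -
  define e where "e = (\<lambda>j::'i. if j = i then (1::complex) else 0)"
  have ve: "vnorm e = 1" unfolding vnorm_def e_def sum_ifd2 by simp
  have ap: "op_apply X e = (\<lambda>k. X k i)" unfolding op_apply_def e_def sum_ifd3 by simp
  have "cmod (X i i) \<le> vnorm (op_apply X e)" unfolding ap by (rule vnorm_ge)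
  also have "\<dots> \<le> opnorm X" unfolding opnorm_def
    by (rule cSup_upper[OF _ opnorm_bdd]) (use ve in auto)
  finally show ?thesis .
qed

lemma opnorm_scalar: assumes "c \<ge> 0"
  shows "opnorm (\<lambda>x y::'i::finite. if x = y then complex_of_real c else 0) \<le> c"
  unfolding opnorm_def
proof (rule cSup_least)
  show "{vnorm (op_apply (\<lambda>x y::'i. if x = y then complex_of_real c else 0) v) | v. vnorm v \<le> 1} \<noteq> {}"
    by (rule ccontr) (auto simp: vnorm_def dest: spec[of _ "\<lambda>_. 0"])
next
  fix r assume "r \<in> {vnorm (op_apply (\<lambda>x y::'i. if x = y then complex_of_real c else 0) v) | v. vnorm v \<le> 1}"
  then obtain v where r: "r = vnorm (op_apply (\<lambda>x y::'i. if x = y then complex_of_real c else 0) v)"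
    and v: "vnorm v \<le> 1" by auto
  have ap: "op_apply (\<lambda>x y::'i. if x = y then complex_of_real c else 0) v = (\<lambda>i. complex_of_real c * v i)"
    unfolding op_apply_def by (simp add: sum_ifd1)
  have "vnorm (\<lambda>i. complex_of_real c * v i) = c * vnorm v"
    using assms unfolding vnorm_def
    by (simp add: norm_mult power_mult_distrib sum_distrib_left[symmetric] real_sqrt_mult)
  then show "r \<le> c" using r ap v assms by (simp add: mult_left_le)
qed


definition qf :: "'i::finite op \<Rightarrow> ('i \<Rightarrow> complex) \<Rightarrow> complex" where
  "qf X v = (\<Sum>i\<in>UNIV. \<Sum>j\<in>UNIV. cnj (v i) * X i j * v j)"

lemma psd_qf: "psd X \<longleftrightarrow> (\<forall>v. qf X v \<in> \<real> \<and> 0 \<le> Re (qf X v))"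
  unfolding psd_def qf_def by simp

lemma qf_add: "qf (\<lambda>x y. X x y + Y x y) v = qf X v + qf Y v"
  unfolding qf_def by (simp add: ring_distribs sum.distrib)

lemma qf_scale: "qf (\<lambda>x y. c * X x y) v = c * qf X v"
  unfolding qf_def by (simp add: sum_distrib_left mult_ac)

lemma psd_add: "psd X \<Longrightarrow> psd Y \<Longrightarrow> psd (\<lambda>x y. X x y + Y x y)"
  unfolding psd_qf qf_add by auto

lemma psd_scale: assumes "psd X" "r \<ge> 0" shows "psd (\<lambda>x y. complex_of_real r * X x y)"
  using assms unfolding psd_qf qf_scale by auto

lemma qf_delta: "qf X (\<lambda>j. if j = i then 1 else 0) = X i (i::'i::finite)"
proof -
  have "\<And>a. (\<Sum>j\<in>UNIV. cnj (if a = i then 1 else 0) * X a j * (if j = i then 1 else 0))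
     = cnj (if a = i then 1 else 0) * X a i"
    using sum_ifd3[of "\<lambda>j. cnj (if _ = i then 1 else 0) * X _ j" i] by simp
  then have "qf X (\<lambda>j. if j = i then 1 else 0) = (\<Sum>a\<in>UNIV. cnj (if a = i then 1 else 0) * X a i)"
    unfolding qf_def by simp
  also have "\<dots> = (\<Sum>a\<in>UNIV. if a = i then X a i else 0)"
    by (rule sum.cong) auto
  also have "\<dots> = X i i" by simp
  finally show ?thesis .
qed

lemma psd_diag: assumes "psd X" shows "0 \<le> Re (X i (i::'i::finite))"
  using assms unfolding psd_qf by (metis qf_delta)

lemma ptBB_diag: "ptBB X w w = X w w"
  unfolding ptBB_def by (auto split: prod.splits)

lemma ptBB_map2: "ptBB (\<lambda>x y. f (X x y) (Y x y)) = (\<lambda>x y. f (ptBB X x y) (ptBB Y x y))"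
  unfolding ptBB_def by (auto simp: fun_eq_iff split: prod.splits)

lemma ptBB_map1: "ptBB (\<lambda>x y. f (X x y)) = (\<lambda>x y. f (ptBB X x y))"
  unfolding ptBB_def by (auto simp: fun_eq_iff split: prod.splits)

lemma trace_unit: "op_trace (unit_op (x::'i::finite) y) = (if x = y then 1 else 0)"
proof -
  have "(\<lambda>i. unit_op x y i i) = (\<lambda>i. if i = x then (if x = y then 1 else 0) else 0)"
    by (auto simp: unit_op_def fun_eq_iff)
  show ?thesis unfolding op_trace_def \<open>_ = _\<close> by simp
qed

lemma tr_choi: assumes "bichannel M"
  shows "trA'B' (choi M) = (\<lambda>x y. if x = y then 1 else 0)"
proof -
  have "trA'B' (choi M) x y = op_trace (M (unit_op x y))" for x y
    unfolding trA'B'_def choi_def op_trace_def by simp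
  then show ?thesis using assms unfolding bichannel_def by (simp add: trace_unit fun_eq_iff)
qed


lemma ptB_scalar: "ptB (\<lambda>x y. if x = y then c else 0) = (\<lambda>x y. if x = y then c else 0)"
  unfolding ptB_def by (auto simp: fun_eq_iff split: prod.splits)

theorem lemma1:
  fixes N :: "('a::finite \<times> 'b::finite) op \<Rightarrow> ('c::finite \<times> 'd::finite) op"
  assumes "bichannel N"
  shows "gamma_PPT N \<ge> ereal (2 powr LN_max N - 1)"
  unfolding gamma_PPT_def
proof (rule Inf_greatest)
  fix e assume "e \<in> {ereal (c1 + c2) | c1 c2 M1 M2.
      c1 \<ge> 0 \<and> c2 \<ge> 0 \<and> ppt_channel M1 \<and> ppt_channel M2 \<and>
      N = (\<lambda>X k l. complex_of_real c1 * M1 X k l - complex_of_real c2 * M2 X k l)}"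
  then obtain c1 c2 M1 M2 where e: "e = ereal (c1 + c2)" and "(c1::real) \<ge> 0 \<and> c2 \<ge> 0 \<and> ppt_channel M1 \<and> ppt_channel M2 \<and>
      N = (\<lambda>X k l. complex_of_real c1 * M1 X k l - complex_of_real c2 * M2 X k l)" by blast
  then have c1: "c1 \<ge> 0" and c2: "c2 \<ge> 0" and M1: "ppt_channel M1" and M2: "ppt_channel M2"
    and Neq: "N = (\<lambda>X k l. complex_of_real c1 * M1 X k l - complex_of_real c2 * M2 X k l)" by auto
  define J1 where "J1 = choi M1"
  define J2 where "J2 = choi M2"
  define P where "P = (\<lambda>x y. complex_of_real c1 * J1 x y + complex_of_real c2 * J2 x y)"
  define S where "S = {max (opnorm (trA'B' P)) (opnorm (ptB (trA'B' P))) | P :: (('a \<times> 'b) \<times> ('c \<times> 'd)) op.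
      psd P \<and>
      psd (\<lambda>x y. ptBB (choi N) x y + ptBB P x y) \<and>
      psd (\<lambda>x y. ptBB P x y - ptBB (choi N) x y)}"
  have choiN: "choi N = (\<lambda>x y. complex_of_real c1 * J1 x y - complex_of_real c2 * J2 x y)"
    unfolding Neq J1_def J2_def choi_def by (auto simp: fun_eq_iff split: prod.splits)
  have J1p: "psd J1" "psd (ptBB J1)" using M1 unfolding J1_def ppt_channel_def bichannel_def by auto
  have J2p: "psd J2" "psd (ptBB J2)" using M2 unfolding J2_def ppt_channel_def bichannel_def by auto
  have Pp: "psd P" unfolding P_def by (rule psd_add; rule psd_scale) (use J1p J2p c1 c2 in auto)
  have ptP: "ptBB P = (\<lambda>x y. complex_of_real c1 * ptBB J1 x y + complex_of_real c2 * ptBB J2 x y)"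
    unfolding P_def by (rule ptBB_map2)
  have ptN: "ptBB (choi N) = (\<lambda>x y. complex_of_real c1 * ptBB J1 x y - complex_of_real c2 * ptBB J2 x y)"
    unfolding choiN by (rule ptBB_map2)
  have e1: "(\<lambda>x y. ptBB (choi N) x y + ptBB P x y) = (\<lambda>x y. complex_of_real (2 * c1) * ptBB J1 x y)"
    unfolding ptP ptN by (auto simp: fun_eq_iff algebra_simps)
  have e2: "(\<lambda>x y. ptBB P x y - ptBB (choi N) x y) = (\<lambda>x y. complex_of_real (2 * c2) * ptBB J2 x y)"
    unfolding ptP ptN by (auto simp: fun_eq_iff algebra_simps)
  have p1: "psd (\<lambda>x y. ptBB (choi N) x y + ptBB P x y)"
    unfolding e1 by (rule psd_scale) (use J1p c1 in auto)
  have p2: "psd (\<lambda>x y. ptBB P x y - ptBB (choi N) x y)"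
    unfolding e2 by (rule psd_scale) (use J2p c2 in auto)
  have trP: "trA'B' P = (\<lambda>x y. if x = y then complex_of_real (c1 + c2) else 0)"
  proof -
    have "trA'B' P x y = complex_of_real c1 * trA'B' J1 x y + complex_of_real c2 * trA'B' J2 x y" for x y
      unfolding trA'B'_def P_def by (simp add: sum.distrib sum_distrib_left)
    then show ?thesis
      using tr_choi[of M1] tr_choi[of M2] M1 M2 unfolding J1_def J2_def ppt_channel_def
      by (auto simp: fun_eq_iff)
  qed
  have memS: "max (opnorm (trA'B' P)) (opnorm (ptB (trA'B' P))) \<in> S"
    unfolding S_def using Pp p1 p2 by blast
  have valP: "max (opnorm (trA'B' P)) (opnorm (ptB (trA'B' P))) \<le> c1 + c2"
    unfolding trP ptB_scalar using opnorm_scalar[of "c1 + c2"] c1 c2 by simp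
  have lower: "s \<ge> 1" if "s \<in> S" for s
  proof -
    obtain Q where s: "s = max (opnorm (trA'B' Q)) (opnorm (ptB (trA'B' Q)))"
      and Q: "psd (\<lambda>x y. ptBB Q x y - ptBB (choi N) x y)"
      using \<open>s \<in> S\<close> unfolding S_def by blast
    obtain x :: "'a \<times> 'b" where True by simp
    have d: "Re (choi N (x, k) (x, k)) \<le> Re (Q (x, k) (x, k))" for k
      using psd_diag[OF Q, of "(x, k)"] by (simp add: ptBB_diag)
    have "1 = Re (\<Sum>k\<in>UNIV. choi N (x, k) (x, k))"
    proof -
      have "(\<Sum>k\<in>UNIV. choi N (x, k) (x, k)) = op_trace (N (unit_op x x))"
        unfolding choi_def op_trace_def by simp
      also have "\<dots> = 1" using assms unfolding bichannel_def by (simp add: trace_unit)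
      finally show ?thesis by simp
    qed
    also have "\<dots> \<le> Re (trA'B' Q x x)"
      unfolding trA'B'_def Re_sum by (rule sum_mono) (rule d)
    also have "\<dots> \<le> cmod (trA'B' Q x x)" by (rule complex_Re_le_cmod)
    also have "\<dots> \<le> opnorm (trA'B' Q)" by (rule opnorm_ge_diag)
    also have "\<dots> \<le> s" unfolding s by simp
    finally show ?thesis .
  qed
  have Sne: "S \<noteq> {}" using memS by blast
  have inf1: "Inf S \<ge> 1" by (rule cInf_greatest[OF Sne lower])
  have inf2: "Inf S \<le> c1 + c2"
    using cInf_lower[OF memS] lower valP by (meson bdd_below_def order_trans)
  have LN: "LN_max N = log 2 (Inf S)" unfolding LN_max_def S_def by simp
  have "2 powr LN_max N = Inf S" unfolding LN using inf1 by simp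
  then show "ereal (2 powr LN_max N - 1) \<le> e" using inf2 e by simp
qed

end
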